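(* For any integer $m\ge1$, the number of graphs on the vertex set $\{1,\dots,n\}$ that are intersection graphs of $n$ numbered axis-parallel boxes in $\mathbb{R}^m$ equals $n^{(2m+o(1))n}$.
   Context: An axis-parallel box in $\mathbb{R}^m$ is a set $\prod_{i=1}^m[\alpha_i,\beta_i]$ with $\alpha_i<\beta_i$. The intersection graph of objects $D_1,\dots,D_n$ is the graph on $\{1,\dots,n\}$ in which $i\neq j$ are adjacent iff $D_i\cap D_j\neq\emptyset$. "Equals $n^{(c+o(1))n}$" means equals $n^{(c+\varepsilon(n))n}$ for some function $\varepsilon(n)\to0$ as $n\to\infty$ (for fixed $m$). *)

theory Defs
  imports Complex_Main
begin

text \<open>Axis-parallel box in R^m given by lower corner a and upper corner b
  (coordinates 0..m-1). Points of R^m are represented as functions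
  nat => real, only coordinates i < m being constrained.\<close>
definition box_set :: "nat \<Rightarrow> (nat \<Rightarrow> real) \<Rightarrow> (nat \<Rightarrow> real) \<Rightarrow> (nat \<Rightarrow> real) set" where
  "box_set m a b = {x. \<forall>i<m. a i \<le> x i \<and> x i \<le> b i}"

definition nondeg_box :: "nat \<Rightarrow> (nat \<Rightarrow> real) \<Rightarrow> (nat \<Rightarrow> real) \<Rightarrow> bool" where
  "nondeg_box m a b \<longleftrightarrow> (\<forall>i<m. a i < b i)"

definition intersection_graph :: "nat \<Rightarrow> (nat \<Rightarrow> 'a set) \<Rightarrow> nat set set" where
  "intersection_graph n D =
     {{i, j} | i j. i \<in> {1..n} \<and> j \<in> {1..n} \<and> i \<noteq> j \<and> D i \<inter> D j \<noteq> {}}"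

definition box_graphs :: "nat \<Rightarrow> nat \<Rightarrow> nat set set set" where
  "box_graphs m n =
     {intersection_graph n (\<lambda>k. box_set m (a k) (b k)) | a b.
        \<forall>k\<in>{1..n}. nondeg_box m (a k) (b k)}"

end

theory Submission
  imports Defs "HOL-Library.FuncSet"
begin


lemma ig_mem:
  assumes "i \<in> {1..n}" "j \<in> {1..n}" "i \<noteq> j"
  shows "{i,j} \<in> intersection_graph n D \<longleftrightarrow> D i \<inter> D j \<noteq> {}"
  using assms by (auto simp: intersection_graph_def doubleton_eq_iff Int_commute)

lemma box_meet:
  assumes "\<forall>c<m. a c \<le> b c" "\<forall>c<m. a' c \<le> b' c"
  shows "box_set m a b \<inter> box_set m a' b' \<noteq> {} \<longleftrightarrow> (\<forall>c<m. a c \<le> b' c \<and> a' c \<le> b c)"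
proof
  assume "box_set m a b \<inter> box_set m a' b' \<noteq> {}"
  then obtain x where "x \<in> box_set m a b" "x \<in> box_set m a' b'" by blast
  then show "\<forall>c<m. a c \<le> b' c \<and> a' c \<le> b c" unfolding box_set_def by force
next
  assume h: "\<forall>c<m. a c \<le> b' c \<and> a' c \<le> b c"
  have "(\<lambda>c. max (a c) (a' c)) \<in> box_set m a b \<inter> box_set m a' b'"
    using h assms unfolding box_set_def by auto
  then show "box_set m a b \<inter> box_set m a' b' \<noteq> {}" by blast
qed

lemma rank_mono:
  fixes V :: "real set"
  assumes "finite V" "v \<in> V" "w \<in> V"
  shows "card {u\<in>V. u < v} \<le> card {u\<in>V. u < w} \<longleftrightarrow> v \<le> w"
proof
  assume "v \<le> w"
  then have "{u\<in>V. u < v} \<subseteq> {u\<in>V. u < w}" by (blast intro: less_le_trans)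
  moreover have "finite {u\<in>V. u < w}" using assms(1) by simp
  ultimately show "card {u\<in>V. u < v} \<le> card {u\<in>V. u < w}"
    by (intro card_mono)
next
  assume h: "card {u\<in>V. u < v} \<le> card {u\<in>V. u < w}"
  show "v \<le> w"
  proof (rule ccontr)
    assume "\<not> v \<le> w"
    then have wv: "w < v" by simp
    have "{u\<in>V. u < w} \<subseteq> {u\<in>V. u < v}" using wv by (blast intro: less_trans)
    moreover have "w \<in> {u\<in>V. u < v}" "w \<notin> {u\<in>V. u < w}" using wv assms(3) by simp_all
    ultimately have "{u\<in>V. u < w} \<subset> {u\<in>V. u < v}" by blast
    moreover have "finite {u\<in>V. u < v}" using assms(1) by simp
    ultimately have "card {u\<in>V. u < w} < card {u\<in>V. u < v}"
      by (intro psubset_card_mono)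
    with h show False by simp
  qed
qed

lemma rank_less:
  fixes V :: "real set"
  assumes "finite V" "v \<in> V"
  shows "card {u\<in>V. u < v} < card V"
proof (rule psubset_card_mono)
  show "finite V" by (rule assms(1))
  have "v \<notin> {u\<in>V. u < v}" by simp
  then show "{u\<in>V. u < v} \<subset> V" using assms(2) by blast
qed

definition Gr :: "nat \<Rightarrow> nat \<Rightarrow> (nat \<times> nat \<times> bool \<Rightarrow> nat) \<Rightarrow> nat set set" where
  "Gr m n r = {{i, j} | i j. i \<in> {1..n} \<and> j \<in> {1..n} \<and> i \<noteq> j \<and>
     (\<forall>c<m. r (c,i,False) \<le> r (c,j,True) \<and> r (c,j,False) \<le> r (c,i,True))}"

lemma upper_card:
  "card (box_graphs m n) \<le> (2*n) ^ (m*n*2)"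
proof -
  let ?D = "{..<m} \<times> {1..n} \<times> (UNIV :: bool set)"
  let ?R = "PiE ?D (\<lambda>_. {..<2*n})"
  have sub: "box_graphs m n \<subseteq> Gr m n ` ?R"
  proof
    fix G assume "G \<in> box_graphs m n"
    then obtain a b where G: "G = intersection_graph n (\<lambda>k. box_set m (a k) (b k))"
      and nd: "\<forall>k\<in>{1..n}. nondeg_box m (a k) (b k)"
      unfolding box_graphs_def by blast
    define V where "V c = (\<lambda>k. a k c) ` {1..n} \<union> (\<lambda>k. b k c) ` {1..n}" for c
    define val where "val = (\<lambda>(c::nat,k::nat,\<beta>::bool). if \<beta> then b k c else a k c)"
    define r where "r = (\<lambda>x. if x \<in> ?D then card {u\<in>V (fst x). u < val x} else undefined)"
    have finV: "finite (V c)" for c unfolding V_def by auto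
    have cardV: "card (V c) \<le> 2*n" for c
    proof -
      have "card (V c) \<le> card ((\<lambda>k. a k c) ` {1..n}) + card ((\<lambda>k. b k c) ` {1..n})"
        unfolding V_def by (rule card_Un_le)
      also have "\<dots> \<le> n + n" by (intro add_mono order_trans[OF card_image_le]) auto
      finally show ?thesis by simp
    qed
    have valV: "val (c,k,\<beta>) \<in> V c" if "k \<in> {1..n}" for c k \<beta>
      using that unfolding val_def V_def by auto
    have rR: "r \<in> ?R"
    proof
      fix x assume x: "x \<in> ?D"
      obtain c k \<beta> where xe: "x = (c,k,\<beta>)" by (cases x) auto
      have "card {u\<in>V c. u < val x} < card (V c)"
        using rank_less[OF finV valV] x xe by auto
      then show "r x \<in> {..<2*n}" using cardV[of c] x xe unfolding r_def by auto
    next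
      fix x assume "x \<notin> ?D" then show "r x = undefined" unfolding r_def by auto
    qed
    have key: "(box_set m (a i) (b i) \<inter> box_set m (a j) (b j) \<noteq> {}) \<longleftrightarrow>
         (\<forall>c<m. r (c,i,False) \<le> r (c,j,True) \<and> r (c,j,False) \<le> r (c,i,True))"
      if "i \<in> {1..n}" "j \<in> {1..n}" for i j
    proof -
      have le: "\<forall>c<m. a k c \<le> b k c" if "k \<in> {1..n}" for k
        using nd that unfolding nondeg_box_def by (auto intro: less_imp_le)
      have "(box_set m (a i) (b i) \<inter> box_set m (a j) (b j) \<noteq> {}) \<longleftrightarrow>
          (\<forall>c<m. a i c \<le> b j c \<and> a j c \<le> b i c)"
        by (rule box_meet[OF le le]) (use that in auto)
      also have "\<dots> \<longleftrightarrow> (\<forall>c<m. r (c,i,False) \<le> r (c,j,True) \<and> r (c,j,False) \<le> r (c,i,True))"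
      proof -
        have "r (c,i,False) \<le> r (c,j,True) \<longleftrightarrow> a i c \<le> b j c"
          "r (c,j,False) \<le> r (c,i,True) \<longleftrightarrow> a j c \<le> b i c" if "c < m" for c
        proof -
          have 1: "(card {u\<in>V c. u < val (c,i,False)} \<le> card {u\<in>V c. u < val (c,j,True)}) \<longleftrightarrow> val (c,i,False) \<le> val (c,j,True)"
            by (rule rank_mono[OF finV valV valV]) (use \<open>i \<in> {1..n}\<close> \<open>j \<in> {1..n}\<close> in auto)
          have 2: "(card {u\<in>V c. u < val (c,j,False)} \<le> card {u\<in>V c. u < val (c,i,True)}) \<longleftrightarrow> val (c,j,False) \<le> val (c,i,True)"
            by (rule rank_mono[OF finV valV valV]) (use \<open>i \<in> {1..n}\<close> \<open>j \<in> {1..n}\<close> in auto)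
          show "r (c,i,False) \<le> r (c,j,True) \<longleftrightarrow> a i c \<le> b j c"
            using 1 \<open>i \<in> {1..n}\<close> \<open>j \<in> {1..n}\<close> that unfolding r_def by (simp add: val_def)
          show "r (c,j,False) \<le> r (c,i,True) \<longleftrightarrow> a j c \<le> b i c"
            using 2 \<open>i \<in> {1..n}\<close> \<open>j \<in> {1..n}\<close> that unfolding r_def by (simp add: val_def)
        qed
        then show ?thesis by auto
      qed
      finally show ?thesis .
    qed
    have key2: "\<And>i j. (i \<in> {1..n} \<and> j \<in> {1..n} \<and> i \<noteq> j \<and> box_set m (a i) (b i) \<inter> box_set m (a j) (b j) \<noteq> {}) \<longleftrightarrow>
        (i \<in> {1..n} \<and> j \<in> {1..n} \<and> i \<noteq> j \<and> (\<forall>c<m. r (c,i,False) \<le> r (c,j,True) \<and> r (c,j,False) \<le> r (c,i,True)))"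
      using key by blast
    have "G = Gr m n r"
      unfolding G intersection_graph_def Gr_def by (simp only: key2)
    then show "G \<in> Gr m n ` ?R" using rR by blast
  qed
  have finR: "finite ?R" by (rule finite_PiE) auto
  have "card (box_graphs m n) \<le> card (Gr m n ` ?R)"
    by (rule card_mono[OF finite_imageI[OF finR] sub])
  also have "\<dots> \<le> card ?R" by (rule card_image_le[OF finR])
  also have "\<dots> = (2*n) ^ (m*n*2)"
  proof -
    have "card ?D = m*n*2" by (simp add: card_cartesian_product)
    then show ?thesis by (simp add: card_PiE mult.assoc)
  qed
  finally show ?thesis .
qed

definition Alo :: "nat \<Rightarrow> nat \<Rightarrow> (nat \<Rightarrow> nat \<Rightarrow> nat \<times> nat) \<Rightarrow> nat \<Rightarrow> nat \<Rightarrow> real" where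
  "Alo t m f k c = (if k \<le> 2*t*m then (if c = (k-1) div (2*t) then real ((k-1) mod (2*t) + 1) - 1/4 else 0)
      else real (fst (f k c)))"

definition Bhi :: "nat \<Rightarrow> nat \<Rightarrow> (nat \<Rightarrow> nat \<Rightarrow> nat \<times> nat) \<Rightarrow> nat \<Rightarrow> nat \<Rightarrow> real" where
  "Bhi t m f k c = (if k \<le> 2*t*m then (if c = (k-1) div (2*t) then real ((k-1) mod (2*t) + 1) + 1/4 else real (2*t+1))
      else real (snd (f k c)))"

definition FF :: "nat \<Rightarrow> nat \<Rightarrow> nat \<Rightarrow> (nat \<Rightarrow> nat \<Rightarrow> nat \<times> nat) set" where
  "FF t m n = PiE {2*t*m+1..n} (\<lambda>_. PiE {..<m} (\<lambda>_. {1..t} \<times> {t+1..2*t}))"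

lemma FF_val:
  assumes "f \<in> FF t m n" "2*t*m < k" "k \<le> n" "c < m"
  shows "fst (f k c) \<in> {1..t}" "snd (f k c) \<in> {t+1..2*t}"
proof -
  have "k \<in> {2*t*m+1..n}" "c \<in> {..<m}" using assms by auto
  then have "f k c \<in> {1..t} \<times> {t+1..2*t}" using assms(1) unfolding FF_def by (auto dest!: PiE_mem)
  then show "fst (f k c) \<in> {1..t}" "snd (f k c) \<in> {t+1..2*t}" by auto
qed

lemma nondeg_AB:
  assumes "f \<in> FF t m n" "t \<ge> 1" "k \<in> {1..n}"
  shows "nondeg_box m (Alo t m f k) (Bhi t m f k)"
  unfolding nondeg_box_def
proof (intro allI impI)
  fix c assume c: "c < m"
  show "Alo t m f k c < Bhi t m f k c"
  proof (cases "k \<le> 2*t*m")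
    case True then show ?thesis unfolding Alo_def Bhi_def by auto
  next
    case False
    then show ?thesis using FF_val[OF assms(1) _ _ c, of k] assms(3)
      unfolding Alo_def Bhi_def by auto
  qed
qed

lemma AB_le:
  assumes "f \<in> FF t m n" "t \<ge> 1" "k \<in> {1..n}"
  shows "\<forall>c<m. Alo t m f k c \<le> Bhi t m f k c"
  using nondeg_AB[OF assms] unfolding nondeg_box_def by (auto intro: less_imp_le)

lemma slab_idx:
  fixes t c m j :: nat
  assumes "t \<ge> 1" "c < m" "j \<in> {1..2*t}"
  shows "c*(2*t)+j \<le> 2*t*m" "(c*(2*t)+j - 1) div (2*t) = c" "(c*(2*t)+j - 1) mod (2*t) + 1 = j"
    "c*(2*t)+j \<ge> 1"
proof -
  have "c*(2*t)+j \<le> (m-1)*(2*t) + 2*t" using assms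
    by (intro add_mono mult_right_mono) auto
  also have "\<dots> = 2*t*m" using assms by (cases m) (auto simp: algebra_simps)
  finally show "c*(2*t)+j \<le> 2*t*m" .
  have cm: "c*(2*t) = (2*t)*c" by simp
  obtain j' where jj: "j = Suc j'" using assms(3) by (cases j) auto
  have e: "c*(2*t)+j - 1 = (j-1) + (2*t)*c" unfolding jj by (simp add: ac_simps)
  have l: "j - 1 < 2*t" using assms by auto
  show "(c*(2*t)+j - 1) div (2*t) = c" unfolding e using l by simp
  have m1: "((j-1) + (2*t)*c) mod (2*t) = j-1" using l by (simp only: mod_mult_self2 mod_less)
  show "(c*(2*t)+j - 1) mod (2*t) + 1 = j" unfolding e m1 using jj by simp
  show "c*(2*t)+j \<ge> 1" using assms by auto
qed

lemma adj:
  assumes f: "f \<in> FF t m n" and t: "t \<ge> 1" and k: "2*t*m < k" "k \<le> n" and c: "c < m"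
    and j: "j \<in> {1..2*t}"
  shows "box_set m (Alo t m f k) (Bhi t m f k) \<inter> box_set m (Alo t m f (c*(2*t)+j)) (Bhi t m f (c*(2*t)+j)) \<noteq> {}
     \<longleftrightarrow> fst (f k c) \<le> j \<and> j \<le> snd (f k c)"
proof -
  let ?v = "c*(2*t)+j"
  note si = slab_idx[OF t c j]
  have kn: "k \<in> {1..n}" using k by auto
  have vn: "?v \<in> {1..n}" using si k by auto
  have "box_set m (Alo t m f k) (Bhi t m f k) \<inter> box_set m (Alo t m f ?v) (Bhi t m f ?v) \<noteq> {}
    \<longleftrightarrow> (\<forall>c'<m. Alo t m f k c' \<le> Bhi t m f ?v c' \<and> Alo t m f ?v c' \<le> Bhi t m f k c')"
    by (rule box_meet[OF AB_le[OF f t kn] AB_le[OF f t vn]])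
  also have "\<dots> \<longleftrightarrow> fst (f k c) \<le> j \<and> j \<le> snd (f k c)"
  proof -
    have oth: "Alo t m f k c' \<le> Bhi t m f ?v c' \<and> Alo t m f ?v c' \<le> Bhi t m f k c'"
      if "c' < m" "c' \<noteq> c" for c'
    proof -
      have "fst (f k c') \<le> t" using FF_val(1)[OF f k that(1)] by auto
      then show ?thesis using si that k unfolding Alo_def Bhi_def by auto
    qed
    have "Alo t m f k c \<le> Bhi t m f ?v c \<and> Alo t m f ?v c \<le> Bhi t m f k c
       \<longleftrightarrow> real (fst (f k c)) \<le> real j + 1/4 \<and> real j - 1/4 \<le> real (snd (f k c))"
      using si k unfolding Alo_def Bhi_def by auto
    also have "\<dots> \<longleftrightarrow> fst (f k c) \<le> j \<and> j \<le> snd (f k c)" by linarith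
    finally have cc: "Alo t m f k c \<le> Bhi t m f ?v c \<and> Alo t m f ?v c \<le> Bhi t m f k c
       \<longleftrightarrow> fst (f k c) \<le> j \<and> j \<le> snd (f k c)" .
    show ?thesis using oth cc c by metis
  qed
  finally show ?thesis .
qed

definition Phi :: "nat \<Rightarrow> nat \<Rightarrow> nat \<Rightarrow> (nat \<Rightarrow> nat \<Rightarrow> nat \<times> nat) \<Rightarrow> nat set set" where
  "Phi t m n f = intersection_graph n (\<lambda>k. box_set m (Alo t m f k) (Bhi t m f k))"

lemma Phi_inj:
  assumes t: "t \<ge> 1"
  shows "inj_on (Phi t m n) (FF t m n)"
proof
  fix f g assume f: "f \<in> FF t m n" and g: "g \<in> FF t m n" and eq: "Phi t m n f = Phi t m n g"
  show "f = g"
  proof (rule PiE_ext[OF f[unfolded FF_def] g[unfolded FF_def]])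
    fix k assume kd: "k \<in> {2*t*m+1..n}"
    then have k: "2*t*m < k" "k \<le> n" by auto
    show "f k = g k"
    proof (rule PiE_ext)
      show "f k \<in> PiE {..<m} (\<lambda>_. {1..t} \<times> {t+1..2*t})" using PiE_mem[OF f[unfolded FF_def] kd] .
      show "g k \<in> PiE {..<m} (\<lambda>_. {1..t} \<times> {t+1..2*t})" using PiE_mem[OF g[unfolded FF_def] kd] .
    next
      fix c assume "c \<in> {..<m}"
      then have c: "c < m" by auto
      have H: "(fst (f k c) \<le> j \<and> j \<le> snd (f k c)) \<longleftrightarrow> (fst (g k c) \<le> j \<and> j \<le> snd (g k c))"
        if j: "j \<in> {1..2*t}" for j
      proof -
        let ?v = "c*(2*t)+j"
        note si = slab_idx[OF t c j]
        have kn: "k \<in> {1..n}" using k by auto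
        have vn: "?v \<in> {1..n}" using si k by auto
        have ne: "k \<noteq> ?v" using si k by auto
        have "(fst (f k c) \<le> j \<and> j \<le> snd (f k c)) \<longleftrightarrow> {k, ?v} \<in> Phi t m n f"
          unfolding Phi_def ig_mem[OF kn vn ne] using adj[OF f t k c j] by simp
        also have "\<dots> \<longleftrightarrow> {k, ?v} \<in> Phi t m n g" using eq by simp
        also have "\<dots> \<longleftrightarrow> (fst (g k c) \<le> j \<and> j \<le> snd (g k c))"
          unfolding Phi_def ig_mem[OF kn vn ne] using adj[OF g t k c j] by simp
        finally show ?thesis .
      qed
      have fv: "fst (f k c) \<in> {1..t}" "snd (f k c) \<in> {t+1..2*t}" using FF_val[OF f k c] by auto
      have gv: "fst (g k c) \<in> {1..t}" "snd (g k c) \<in> {t+1..2*t}" using FF_val[OF g k c] by auto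
      have "fst (g k c) \<le> fst (f k c)" using H[of "fst (f k c)"] fv gv by auto
      moreover have "fst (f k c) \<le> fst (g k c)" using H[of "fst (g k c)"] fv gv by auto
      moreover have "snd (f k c) \<le> snd (g k c)" using H[of "snd (f k c)"] fv gv by auto
      moreover have "snd (g k c) \<le> snd (f k c)" using H[of "snd (g k c)"] fv gv by auto
      ultimately show "f k c = g k c" by (simp add: prod_eq_iff)
    qed
  qed
qed

lemma lower_card:
  assumes t: "t \<ge> 1" and n: "2*t*m \<le> n"
  shows "t ^ (2*m*(n - 2*t*m)) \<le> card (box_graphs m n)"
proof -
  have sub: "Phi t m n ` FF t m n \<subseteq> box_graphs m n"
  proof
    fix G assume "G \<in> Phi t m n ` FF t m n"
    then obtain f where f: "f \<in> FF t m n" and G: "G = Phi t m n f" by blast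
    show "G \<in> box_graphs m n" unfolding box_graphs_def G Phi_def
      using nondeg_AB[OF f t] by blast
  qed
  have fin: "finite (box_graphs m n)"
  proof (rule finite_subset)
    show "box_graphs m n \<subseteq> Pow (Pow {1..n})"
      unfolding box_graphs_def intersection_graph_def by auto
  qed auto
  have "card (FF t m n) = ((t*t)^m)^(n - 2*t*m)"
    unfolding FF_def by (simp add: card_PiE card_cartesian_product)
  also have "\<dots> = t ^ (2*m*(n - 2*t*m))"
    by (simp add: power_mult[symmetric] power2_eq_square[symmetric] mult.assoc)
  finally have cF: "card (FF t m n) = t ^ (2*m*(n - 2*t*m))" .
  have "card (FF t m n) = card (Phi t m n ` FF t m n)"
    using card_image[OF Phi_inj[OF t]] by simp
  also have "\<dots> \<le> card (box_graphs m n)" by (rule card_mono[OF fin sub])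
  finally show ?thesis using cF by simp
qed





lemma lim_facts:
  shows lnT: "filterlim (\<lambda>n::nat. ln (real n)) at_top sequentially"
    and l3: "(\<lambda>n::nat. 1 / ln (real n)) \<longlonglongrightarrow> 0"
    and l5: "(\<lambda>n::nat. ln (ln (real n)) / ln (real n)) \<longlonglongrightarrow> 0"
    and l6: "(\<lambda>n::nat. (ln (real n))^2 / real n) \<longlonglongrightarrow> 0"
proof -
  show lnT: "filterlim (\<lambda>n::nat. ln (real n)) at_top sequentially"
    by (rule filterlim_compose[OF ln_at_top filterlim_real_sequentially])
  show "(\<lambda>n::nat. 1 / ln (real n)) \<longlonglongrightarrow> 0"
    using tendsto_inverse_0_at_top[OF lnT] by (simp add: divide_inverse)
  show "(\<lambda>n::nat. ln (ln (real n)) / ln (real n)) \<longlonglongrightarrow> 0"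
    by (rule filterlim_compose[OF ln_x_over_x_tendsto_0 lnT])
  have sT: "filterlim (\<lambda>n::nat. sqrt (real n)) at_top sequentially"
    by (rule filterlim_compose[OF sqrt_at_top filterlim_real_sequentially])
  have "(\<lambda>n::nat. ln (sqrt (real n)) / sqrt (real n)) \<longlonglongrightarrow> 0"
    by (rule filterlim_compose[OF ln_x_over_x_tendsto_0 sT])
  then have "(\<lambda>n::nat. 4 * (ln (sqrt (real n)) / sqrt (real n))^2) \<longlonglongrightarrow> 4 * 0^2"
    by (intro tendsto_mult tendsto_const tendsto_power)
  moreover have "4 * (ln (sqrt (real n)) / sqrt (real n))^2 = (ln (real n))^2 / real n" for n :: nat
    by (simp add: ln_sqrt power_divide)
  ultimately show "(\<lambda>n::nat. (ln (real n))^2 / real n) \<longlonglongrightarrow> 0" by simp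
qed

lemma asym:
  fixes C :: "nat \<Rightarrow> real" and m :: nat
  assumes U: "\<And>n. n \<ge> 1 \<Longrightarrow> C n \<le> (2 * real n) ^ (m*n*2)"
    and L: "\<And>n t. t \<ge> 1 \<Longrightarrow> 2*t*m \<le> n \<Longrightarrow> real t ^ (2*m*(n - 2*t*m)) \<le> C n"
    and P: "\<And>n. n \<ge> 1 \<Longrightarrow> C n \<ge> 1"
  shows "(\<lambda>n. ln (C n) / (real n * ln (real n))) \<longlonglongrightarrow> 2 * real m"
proof -
  define up where "up n = 2 * real m * (1 + ln 2 * (1 / ln (real n)))" for n :: nat
  define x where "x n = real n / (ln (real n))^2" for n :: nat
  define low where "low n = 2 * real m * (1 - 2 * real m * (1 / ln (real n))^2)
      * (1 - 2 * (ln (ln (real n)) / ln (real n)) - ln 2 * (1 / ln (real n)))" for n :: nat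
  note l3 = lim_facts(2) and l5 = lim_facts(3) and l6 = lim_facts(4)
  have UL: "up \<longlonglongrightarrow> 2 * real m * (1 + ln 2 * 0)"
    unfolding up_def by (intro tendsto_mult tendsto_add tendsto_const l3)
  have LL: "low \<longlonglongrightarrow> 2 * real m * (1 - 2 * real m * 0^2) * (1 - 2 * 0 - ln 2 * 0)"
    unfolding low_def by (intro tendsto_mult tendsto_diff tendsto_const tendsto_power l3 l5)
  have ev_up: "eventually (\<lambda>n. n \<ge> (3::nat)) sequentially" by (rule eventually_ge_at_top)
  have EU: "eventually (\<lambda>n. ln (C n) / (real n * ln (real n)) \<le> up n) sequentially"
    using ev_up
  proof eventually_elim
    case (elim n)
    have n3: "real n \<ge> 3" using elim by simp
    have lnpos: "ln (real n) > 0" using n3 by simp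
    have "ln (C n) \<le> ln ((2 * real n) ^ (m*n*2))"
      using U[of n] P[of n] elim by (subst ln_le_cancel_iff) auto
    also have "\<dots> = real (m*n*2) * ln (2 * real n)" by (rule ln_realpow)
    also have "\<dots> = real (m*n*2) * (ln 2 + ln (real n))" using n3 by (simp add: ln_mult)
    finally have "ln (C n) \<le> real (m*n*2) * (ln 2 + ln (real n))" .
    then have "ln (C n) / (real n * ln (real n)) \<le> real (m*n*2) * (ln 2 + ln (real n)) / (real n * ln (real n))"
      using n3 lnpos by (intro divide_right_mono) auto
    also have "\<dots> = up n" unfolding up_def using n3 lnpos by (simp add: field_simps)
    finally show ?case .
  qed
  have e2: "eventually (\<lambda>n. (ln (real n))^2 / real n < 1/2) sequentially"
    by (rule order_tendstoD(2)[OF l6]) simp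
  have e3: "eventually (\<lambda>n. 2 * real m * (1 / ln (real n))^2 < 1) sequentially"
  proof -
    have "(\<lambda>n::nat. 2 * real m * (1 / ln (real n))^2) \<longlonglongrightarrow> 2 * real m * 0^2"
      by (intro tendsto_mult tendsto_const tendsto_power l3)
    then show ?thesis by (rule order_tendstoD(2)) simp
  qed
  have EL: "eventually (\<lambda>n. low n \<le> ln (C n) / (real n * ln (real n))) sequentially"
    using ev_up e2 e3
  proof eventually_elim
    case (elim n)
    have n3: "real n \<ge> 3" using elim by simp
    have lnpos: "ln (real n) > 0" using n3 by simp
    have xn: "x n * (ln (real n))^2 = real n" unfolding x_def using lnpos by simp
    have x2: "x n \<ge> 2"
    proof -
      have "(ln (real n))^2 < real n / 2" using elim(2) n3 by (simp add: field_simps)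
      then have "2 * (ln (real n))^2 \<le> x n * (ln (real n))^2" using xn by simp
      then show ?thesis using lnpos by simp
    qed
    define t where "t = nat \<lfloor>x n\<rfloor>"
    have tr: "real t = of_int \<lfloor>x n\<rfloor>" unfolding t_def using x2 by simp
    have tlo: "real t > x n - 1" "real t \<le> x n" unfolding tr by linarith+
    have t1: "t \<ge> 1" using tlo x2 by linarith
    have mx: "2 * real m * x n \<le> real n"
    proof -
      have "2 * real m * x n = real n * (2 * real m * (1 / ln (real n))^2)"
        using xn lnpos by (simp add: field_simps)
      also have "\<dots> \<le> real n * 1" using elim by (intro mult_left_mono) auto
      finally show ?thesis by simp
    qed
    have "real t * real m \<le> x n * real m"
      using tlo(2) by (intro mult_right_mono) auto
    then have "real (2*t*m) \<le> real n" using mx by (simp add: mult.commute mult.left_commute)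
    then have tm: "2*t*m \<le> n" by linarith
    have "real t ^ (2*m*(n - 2*t*m)) \<le> C n" by (rule L[OF t1 tm])
    then have "ln (real t ^ (2*m*(n - 2*t*m))) \<le> ln (C n)"
      using t1 P[of n] elim by (subst ln_le_cancel_iff) auto
    then have A: "real (2*m*(n - 2*t*m)) * ln (real t) \<le> ln (C n)"
      by (simp add: ln_realpow)
    have B1: "real (2*m*(n - 2*t*m)) \<ge> 2 * real m * (real n - 2 * real m * x n)"
    proof -
      have r: "real (n - 2*t*m) = real n - 2 * real t * real m" using tm by (simp add: of_nat_diff)
      have e: "real (2*m*(n - 2*t*m)) = 2 * real m * (real n - 2 * real t * real m)"
        by (simp only: of_nat_mult r)
      have "real t * real m \<le> x n * real m"
        using tlo(2) by (intro mult_right_mono) auto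
      then have "real n - 2 * real m * x n \<le> real n - 2 * real t * real m" by (simp add: mult.commute)
      then have "2 * real m * (real n - 2 * real m * x n) \<le> 2 * real m * (real n - 2 * real t * real m)"
        by (intro mult_left_mono) auto
      then show ?thesis by (subst e)
    qed
    have B2: "ln (real t) \<ge> ln (x n - 1)" using tlo x2 by (subst ln_le_cancel_iff) auto
    have B3: "ln (x n - 1) \<ge> 0" using x2 by simp
    have B4: "2 * real m * (real n - 2 * real m * x n) \<ge> 0" using mx by simp
    have B5: "ln (x n - 1) \<ge> ln (real n) - 2 * ln (ln (real n)) - ln 2"
    proof -
      have "ln (x n / 2) \<le> ln (x n - 1)" using x2 by (subst ln_le_cancel_iff) auto
      moreover have "ln (x n / 2) = ln (real n) - 2 * ln (ln (real n)) - ln 2"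
        unfolding x_def using lnpos n3 by (simp add: ln_div ln_mult ln_realpow)
      ultimately show ?thesis by simp
    qed
    have "2 * real m * (real n - 2 * real m * x n) * (ln (real n) - 2 * ln (ln (real n)) - ln 2)
        \<le> 2 * real m * (real n - 2 * real m * x n) * ln (x n - 1)"
      using B4 B5 by (intro mult_left_mono) auto
    also have "\<dots> \<le> real (2*m*(n - 2*t*m)) * ln (real t)"
      using B1 B2 B3 B4 by (intro mult_mono) auto
    also note A
    finally have F: "2 * real m * (real n - 2 * real m * x n) * (ln (real n) - 2 * ln (ln (real n)) - ln 2) \<le> ln (C n)" .
    have "low n = 2 * real m * (real n - 2 * real m * x n) * (ln (real n) - 2 * ln (ln (real n)) - ln 2) / (real n * ln (real n))"
      unfolding low_def using xn lnpos n3 by (simp add: field_simps power2_eq_square x_def)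
    also have "\<dots> \<le> ln (C n) / (real n * ln (real n))"
      using F lnpos n3 by (intro divide_right_mono) auto
    finally show ?case .
  qed
  have "(\<lambda>n. ln (C n) / (real n * ln (real n))) \<longlonglongrightarrow> 2 * real m"
    by (rule tendsto_sandwich[OF EL EU]) (use LL UL in simp_all)
  then show ?thesis .
qed


lemma bg_finite: "finite (box_graphs m n)"
proof (rule finite_subset)
  show "box_graphs m n \<subseteq> Pow (Pow {1..n})"
    unfolding box_graphs_def intersection_graph_def by auto
qed auto

lemma bg_nonempty: "intersection_graph n (\<lambda>k. box_set m (\<lambda>_. 0) (\<lambda>_. 1)) \<in> box_graphs m n"
  unfolding box_graphs_def mem_Collect_eq
  by (rule exI[where x="\<lambda>_ _. 0"], rule exI[where x="\<lambda>_ _. 1"]) (simp add: nondeg_box_def)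

lemma bg_one: assumes "n = 1" shows "card (box_graphs m n) = 1"
proof -
  have z: "G = {}" if "G \<in> box_graphs m n" for G
    using that assms unfolding box_graphs_def intersection_graph_def by auto
  have h: "intersection_graph n (\<lambda>k. box_set m (\<lambda>_. 0) (\<lambda>_. 1)) \<in> box_graphs m n"
    by (rule bg_nonempty)
  have "{} \<in> box_graphs m n" using z[OF h] h by simp
  then have "box_graphs m n = {{}}" using z by blast
  then show ?thesis by simp
qed

theorem corollary2p8:
  fixes m :: nat
  assumes "m \<ge> 1"
  shows "\<exists>\<epsilon> :: nat \<Rightarrow> real. \<epsilon> \<longlonglongrightarrow> 0 \<and>
           (\<forall>n\<ge>1. real (card (box_graphs m n)) = real n powr ((2 * real m + \<epsilon> n) * real n))"
proof -
  define C where "C n = real (card (box_graphs m n))" for n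
  have U: "C n \<le> (2 * real n) ^ (m*n*2)" if "n \<ge> 1" for n
  proof -
    have "C n \<le> real ((2*n) ^ (m*n*2))" unfolding C_def using upper_card[of m n] by linarith
    then show ?thesis by simp
  qed
  have L: "real t ^ (2*m*(n - 2*t*m)) \<le> C n" if "t \<ge> 1" "2*t*m \<le> n" for n t
  proof -
    have "real (t ^ (2*m*(n - 2*t*m))) \<le> C n" unfolding C_def using lower_card[OF that] by linarith
    then show ?thesis by simp
  qed
  have P: "C n \<ge> 1" if "n \<ge> 1" for n
  proof -
    have "card (box_graphs m n) \<noteq> 0" using bg_finite bg_nonempty by (metis card_0_eq empty_iff)
    then show ?thesis unfolding C_def by simp
  qed
  define q where "q n = ln (C n) / (real n * ln (real n))" for n
  have lim: "q \<longlonglongrightarrow> 2 * real m" unfolding q_def by (rule asym[OF U L P])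
  define \<epsilon> where "\<epsilon> n = q n - 2 * real m" for n
  have "\<epsilon> \<longlonglongrightarrow> 2 * real m - 2 * real m" unfolding \<epsilon>_def by (intro tendsto_diff lim tendsto_const)
  then have l0: "\<epsilon> \<longlonglongrightarrow> 0" by simp
  have eq: "C n = real n powr ((2 * real m + \<epsilon> n) * real n)" if n: "n \<ge> 1" for n
  proof (cases "n = 1")
    case True
    have "card (box_graphs m n) = 1" by (rule bg_one[OF True])
    then show ?thesis unfolding C_def using True by simp
  next
    case False
    then have n2: "n \<ge> 2" using n by simp
    then have lnpos: "ln (real n) > 0" by simp
    have "(2 * real m + \<epsilon> n) * real n = ln (C n) / ln (real n)"
      unfolding \<epsilon>_def q_def using n2 lnpos by (simp add: field_simps)
    then have "real n powr ((2 * real m + \<epsilon> n) * real n) = exp (ln (C n) / ln (real n) * ln (real n))"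
      using n2 by (simp add: powr_def)
    also have "\<dots> = C n" using lnpos P[OF n] by simp
    finally show ?thesis by simp
  qed
  show ?thesis using l0 eq unfolding C_def by blast
qed

end
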